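(* Let $t$ be a positive integer, $\mathbf v$ a good vector with respect to $t$, and $n=4t+1$ if $|\mathbf v|=2t$, $n=4t+2$ if $|\mathbf v|=2t+1$. Then the code of Construction C built from $\mathbf v$ is an $\bigl(n,(t+1)n,k,n\bigr)$-BAC over $\mathbb{F}_q$ with $k=\bigl\lfloor(\sqrt{t+\tfrac14}+\tfrac12)^2\bigr\rfloor$.
   Context: Fix a finite field $\mathbb{F}_q$. Good vector: for a positive integer $t$, $\mathbf v=(v_1,\dots,v_{2t})\in[t]^{2t}$ or $\mathbf v\in\{0,\dots,t\}^{2t+1}$ is good w.r.t. $t$ if every $j\in[t]$ appears exactly twice in $\mathbf v$ and whenever $v_i=v_{i'}=j\in[t]$ with $i<i'$ then $i'-i=j$; for $j\in[t]$ let $j(\mathbf v)=\max\{i:v_i=j\}$. Construction C: indices modulo $n$ with representatives in $[n]$; for $\mathbf x\in\mathbb{F}_q^n$, $i\in[n]$, $j\in[t]$ put $y_{i,j}=x_{i-t-j(\mathbf v)}+x_{i-t-j(\mathbf v)+j}$ and $\mathcal C(\mathbf x)=(\mathbf c_1,\dots,\mathbf c_n)$ with $\mathbf c_i=(x_i,y_{i,1},\dots,y_{i,t})$. An $(n,N,k,m)$-batch array code (BAC) over $\mathbb{F}_q$ is an $\mathbb{F}_q$-linear map $\mathbf x\mapsto(\mathbf c_1,\dots,\mathbf c_m)$ with buckets $\mathbf c_\ell\in\mathbb{F}_q^{N_\ell}$, $N_\ell\ge1$, $\sum_\ell N_\ell=N$, such that for every multiset $\{\{i_1,\dots,i_k\}\}$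 of elements of $[n]$ there is a partition of $[m]$ into $k$ sets $R_1,\dots,R_k$ such that for each $j\in[k]$, $x_{i_j}$ is an $\mathbb{F}_q$-linear combination of values $f_\ell(\mathbf c_\ell)$, $\ell\in R_j$, for some linear functionals $f_\ell$ (independent of $\mathbf x$). *)

theory Defs
  imports Complex_Main
begin

text \<open>Vectors are lists; position i (1-indexed, as in the paper) is v ! (i - 1).\<close>

definition good_vector :: "nat \<Rightarrow> nat list \<Rightarrow> bool" where
  "good_vector t v \<longleftrightarrow>
     ((length v = 2 * t \<and> set v \<subseteq> {1..t}) \<or> (length v = 2 * t + 1 \<and> set v \<subseteq> {0..t})) \<and>
     (\<forall>j\<in>{1..t}. card {i \<in> {1..length v}. v ! (i - 1) = j} = 2) \<and>
     (\<forall>i i' j. 1 \<le> i \<and> i < i' \<and> i' \<le> length v \<and> j \<in> {1..t} \<and>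
               v ! (i - 1) = j \<and> v ! (i' - 1) = j \<longrightarrow> i' - i = j)"

definition jpos :: "nat list \<Rightarrow> nat \<Rightarrow> nat" where
  "jpos v j = Max {i \<in> {1..length v}. v ! (i - 1) = j}"

definition idx :: "nat \<Rightarrow> int \<Rightarrow> nat" where
  "idx n m = nat ((m - 1) mod int n) + 1"

text \<open>Construction C. The message x is a function on indices {1..n}.
  constrC t v n x l r is coordinate r (0-indexed, r \<le> t) of bucket c_l:
  coordinate 0 is x_l, coordinate j \<in> {1..t} is y_{l,j}.\<close>
definition constrC :: "nat \<Rightarrow> nat list \<Rightarrow> nat \<Rightarrow> (nat \<Rightarrow> 'a::field) \<Rightarrow> nat \<Rightarrow> nat \<Rightarrow> 'a" where
  "constrC t v n x l r =
     (if r = 0 then x l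
      else x (idx n (int l - int t - int (jpos v r)))
         + x (idx n (int l - int t - int (jpos v r) + int r)))"

text \<open>(n,N,k,m)-batch array code: bucket sizes Nb l (l \<in> {1..m}), encoder enc x l r
  giving coordinate r < Nb l of bucket l. Linear functionals on F^(Nb l) are written
  out as weight vectors.\<close>
definition is_BAC :: "nat \<Rightarrow> nat \<Rightarrow> nat \<Rightarrow> nat \<Rightarrow> (nat \<Rightarrow> nat)
     \<Rightarrow> ((nat \<Rightarrow> 'a::field) \<Rightarrow> nat \<Rightarrow> nat \<Rightarrow> 'a) \<Rightarrow> bool" where
  "is_BAC n N k m Nb enc \<longleftrightarrow>
     (\<forall>l\<in>{1..m}. Nb l \<ge> 1) \<and> (\<Sum>l\<in>{1..m}. Nb l) = N \<and>
     (\<forall>x y l r. l \<in> {1..m} \<and> r < Nb l \<longrightarrow> enc (\<lambda>i. x i + y i) l r = enc x l r + enc y l r) \<and>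
     (\<forall>x c l r. l \<in> {1..m} \<and> r < Nb l \<longrightarrow> enc (\<lambda>i. c * x i) l r = c * enc x l r) \<and>
     (\<forall>is. length is = k \<and> set is \<subseteq> {1..n} \<longrightarrow>
        (\<exists>R :: nat \<Rightarrow> nat set.
           (\<forall>j<k. R j \<noteq> {}) \<and> (\<forall>j<k. \<forall>j'<k. j \<noteq> j' \<longrightarrow> R j \<inter> R j' = {}) \<and>
           (\<Union>j<k. R j) = {1..m} \<and>
           (\<forall>j<k. \<exists>(w :: nat \<Rightarrow> nat \<Rightarrow> 'a) (a :: nat \<Rightarrow> 'a). \<forall>x.
               x (is ! j) = (\<Sum>l\<in>R j. a l * (\<Sum>r<Nb l. w l r * enc x l r)))))"

end

theory Submission
  imports Defs
begin


lemma block: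
  fixes P :: "nat \<Rightarrow> nat set"
  assumes "finite X" "finite C" "\<forall>c\<in>C. \<forall>c'\<in>C. c \<noteq> c' \<longrightarrow> P c \<inter> P c' = {}"
    "v \<in> X" "\<forall>c\<in>C. v \<notin> P c"
  shows "card {c\<in>C. P c \<inter> X \<noteq> {}} \<le> card X - 1"
proof -
  define f where "f c = (SOME y. y \<in> P c \<inter> (X - {v}))" for c
  have f: "f c \<in> P c \<inter> (X - {v})" if "c \<in> {c\<in>C. P c \<inter> X \<noteq> {}}" for c
  proof -
    have "P c \<inter> (X - {v}) \<noteq> {}" using that assms(5) by blast
    then obtain y where "y \<in> P c \<inter> (X - {v})" by blast
    then show ?thesis unfolding f_def by (rule someI)
  qed
  have "inj_on f {c\<in>C. P c \<inter> X \<noteq> {}}"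
  proof (rule inj_onI)
    fix c c' assume a: "c \<in> {c\<in>C. P c \<inter> X \<noteq> {}}" "c' \<in> {c\<in>C. P c \<inter> X \<noteq> {}}" "f c = f c'"
    show "c = c'"
    proof (rule ccontr)
      assume "c \<noteq> c'"
      then have "P c \<inter> P c' = {}" using a assms(3) by blast
      moreover have "f c \<in> P c" "f c' \<in> P c'" using f a by blast+
      ultimately show False using a(3) by (metis IntI empty_iff)
    qed
  qed
  moreover have "f ` {c\<in>C. P c \<inter> X \<noteq> {}} \<subseteq> X - {v}" using f by blast
  ultimately have "card {c\<in>C. P c \<inter> X \<noteq> {}} \<le> card (X - {v})"
    by (rule card_inj_on_le) (use assms(1) in auto)
  then show ?thesis using assms(1,4) by simp
qed

lemma greedy:
  fixes Q :: "nat \<Rightarrow> nat \<Rightarrow> nat set" and t :: nat and val :: "nat \<Rightarrow> nat"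
  assumes Qdisj: "\<forall>i\<in>V. \<forall>c\<in>{1..2*t}. \<forall>c'\<in>{1..2*t}. c \<noteq> c' \<longrightarrow> Q i c \<inter> Q i c' = {}"
    and Qcard: "\<forall>i\<in>V. \<forall>c\<in>{1..2*t}. finite (Q i c) \<and> card (Q i c) \<le> 2"
    and Qnot: "\<forall>i\<in>V. \<forall>c\<in>{1..2*t}. i \<notin> Q i c"
  shows "finite J \<Longrightarrow> finite B0 \<Longrightarrow> (\<forall>j\<in>J. val j \<in> B0 \<and> val j \<in> V) \<Longrightarrow>
    card B0 + 2 * card J \<le> 2 * t + 2 \<Longrightarrow>
    \<exists>ch. \<forall>j\<in>J. ch j \<in> {1..2*t} \<and> Q (val j) (ch j) \<inter> B0 = {} \<and>
       (\<forall>j'\<in>J. j \<noteq> j' \<longrightarrow> Q (val j) (ch j) \<inter> Q (val j') (ch j') = {})"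
proof (induction J rule: finite_induct)
  case empty
  then show ?case by blast
next
  case (insert x F)
  then have "card B0 + 2 * card F \<le> 2 * t" by simp
  with insert obtain ch where ch: "\<forall>j\<in>F. ch j \<in> {1..2*t} \<and> Q (val j) (ch j) \<inter> B0 = {} \<and>
       (\<forall>j'\<in>F. j \<noteq> j' \<longrightarrow> Q (val j) (ch j) \<inter> Q (val j') (ch j') = {})" by auto
  define B where "B = B0 \<union> (\<Union>j\<in>F. Q (val j) (ch j))"
  have finB: "finite B" unfolding B_def using insert ch Qcard by auto
  have "card (\<Union>j\<in>F. Q (val j) (ch j)) \<le> (\<Sum>j\<in>F. card (Q (val j) (ch j)))"
    using card_UN_le insert(1) by blast
  also have "\<dots> \<le> (\<Sum>j\<in>F. 2)" using ch Qcard insert(5) by (intro sum_mono) auto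
  finally have "card (\<Union>j\<in>F. Q (val j) (ch j)) \<le> 2 * card F" by simp
  then have cB: "card B \<le> card B0 + 2 * card F" unfolding B_def
    using card_Un_le[of B0 "\<Union>j\<in>F. Q (val j) (ch j)"] by linarith
  have vx: "val x \<in> B" "val x \<in> V" using insert(5) unfolding B_def by auto
  have "card {c\<in>{1..2*t}. Q (val x) c \<inter> B \<noteq> {}} \<le> card B - 1"
    by (rule block[OF finB _ _ vx(1)]) (use Qdisj Qnot vx(2) in auto)
  also have "\<dots> < card {1..2*t}"
  proof -
    have "card B > 0" using finB vx(1) card_gt_0_iff by blast
    moreover have "card (insert x F) = Suc (card F)" using insert(1,2) by simp
    ultimately show ?thesis using cB insert(6) by simp
  qed
  finally have lt: "card {c\<in>{1..2*t}. Q (val x) c \<inter> B \<noteq> {}} < card {1..2*t}" .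
  have "\<exists>c\<in>{1..2*t}. Q (val x) c \<inter> B = {}"
  proof (rule ccontr)
    assume "\<not> ?thesis"
    then have "{c\<in>{1..2*t}. Q (val x) c \<inter> B \<noteq> {}} = {1..2*t}" by blast
    then show False using lt by simp
  qed
  then obtain c where c: "c \<in> {1..2*t}" "Q (val x) c \<inter> B = {}" by blast
  define ch' where "ch' = ch(x := c)"
  have "\<forall>j\<in>insert x F. ch' j \<in> {1..2*t} \<and> Q (val j) (ch' j) \<inter> B0 = {} \<and>
       (\<forall>j'\<in>insert x F. j \<noteq> j' \<longrightarrow> Q (val j) (ch' j) \<inter> Q (val j') (ch' j') = {})"
  proof
    fix j assume j: "j \<in> insert x F"
    show "ch' j \<in> {1..2*t} \<and> Q (val j) (ch' j) \<inter> B0 = {} \<and>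
       (\<forall>j'\<in>insert x F. j \<noteq> j' \<longrightarrow> Q (val j) (ch' j) \<inter> Q (val j') (ch' j') = {})"
    proof (cases "j = x")
      case True
      then show ?thesis using c insert(2) unfolding ch'_def B_def by auto
    next
      case False
      then have jF: "j \<in> F" using j by simp
      have "Q (val j) (ch j) \<subseteq> B" using jF unfolding B_def by blast
      have e: "ch' j = ch j" using False unfolding ch'_def by simp
      have ex: "ch' x = c" unfolding ch'_def by simp
      have e2: "ch' j' = ch j'" if "j' \<in> F" for j' using that insert(2) unfolding ch'_def by auto
      have d1: "Q (val j) (ch' j) \<inter> Q (val x) (ch' x) = {}" unfolding e ex using \<open>Q (val j) (ch j) \<subseteq> B\<close> c(2) by blast
      have d2: "Q (val j) (ch' j) \<inter> Q (val j') (ch' j') = {}" if "j' \<in> F" "j \<noteq> j'" for j'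
        unfolding e e2[OF that(1)] using ch jF that by blast
      show ?thesis unfolding e using ch jF d1 d2 e by auto
    qed
  qed
  then show ?case by blast
qed



lemma arith_key:
  fixes d M k t :: nat
  assumes "k \<le> d * M" "(k - t) * (k - t - 1) \<le> t"
  shows "2 * k \<le> 2 * t + d + M"
proof (rule ccontr)
  assume A: "\<not> ?thesis"
  define s where "s = k - t"
  have s1: "s \<ge> 1" and ks: "k = t + s" using A unfolding s_def by auto
  have dm: "d + M + 1 \<le> 2 * s" using A ks by linarith
  have i1: "(int d + int M)^2 = 4 * (int d * int M) + (int d - int M)^2"
    by (simp add: power2_eq_square algebra_simps)
  have i2: "(int d + int M)^2 \<le> (2 * int s - 1)^2"
    using dm s1 by (intro power_mono) auto
  have i3: "(2 * int s - 1)^2 = 4 * (int s * (int s - 1)) + 1"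
    by (simp add: power2_eq_square algebra_simps)
  have i4: "int s * (int s - 1) \<le> int t"
  proof -
    have "s * (s - 1) \<le> t" using assms(2) unfolding s_def by simp
    then have "int (s * (s - 1)) \<le> int t" by linarith
    then show ?thesis using s1 by (simp add: of_nat_diff)
  qed
  have i5: "int k \<le> int d * int M" using assms(1) by (metis of_nat_le_iff of_nat_mult)
  have "0 \<le> (int d - int M)^2" by simp
  then show False using i1 i2 i3 i4 i5 ks s1 by linarith
qed

lemma comb:
  fixes Q :: "nat \<Rightarrow> nat \<Rightarrow> nat set" and t :: nat and "is" :: "nat list"
  assumes Qdisj: "\<forall>i\<in>V. \<forall>c\<in>{1..2*t}. \<forall>c'\<in>{1..2*t}. c \<noteq> c' \<longrightarrow> Q i c \<inter> Q i c' = {}"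
    and Qcard: "\<forall>i\<in>V. \<forall>c\<in>{1..2*t}. finite (Q i c) \<and> card (Q i c) \<le> 2"
    and Qnot: "\<forall>i\<in>V. \<forall>c\<in>{1..2*t}. i \<notin> Q i c"
    and V: "set is \<subseteq> V"
    and ar: "(length is - t) * (length is - t - 1) \<le> t"
  shows "\<exists>S. (\<forall>j<length is. S j = {is!j} \<or> (\<exists>c\<in>{1..2*t}. S j = Q (is!j) c)) \<and>
             (\<forall>j<length is. \<forall>j'<length is. j \<noteq> j' \<longrightarrow> S j \<inter> S j' = {})"
proof (cases "length is = 0")
  case True
  then show ?thesis by simp
next
  case False
  define k where "k = length is"
  define D where "D = set is"
  define fib where "fib i = {j. j < k \<and> is ! j = i}" for i
  have finD: "finite D" "D \<noteq> {}" unfolding D_def using False by auto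
  have finfib: "finite (fib i)" for i unfolding fib_def by simp
  define M where "M = Max ((\<lambda>i. card (fib i)) ` D)"
  have "M \<in> (\<lambda>i. card (fib i)) ` D" unfolding M_def using finD by simp
  then obtain istar where ist: "istar \<in> D" "card (fib istar) = M" by auto
  have Mmax: "card (fib i) \<le> M" if "i \<in> D" for i unfolding M_def using finD that by simp
  have "{..<k} = (\<Union>i\<in>D. fib i)" unfolding fib_def D_def k_def by (auto simp: nth_mem)
  then have "k = card (\<Union>i\<in>D. fib i)" by (metis card_lessThan)
  also have "\<dots> \<le> (\<Sum>i\<in>D. card (fib i))" using card_UN_le finD(1) by blast
  also have "\<dots> \<le> (\<Sum>i\<in>D. M)" using Mmax by (intro sum_mono) auto
  finally have kdM: "k \<le> card D * M" by simp
  define F where "F = {j. j < k \<and> (\<forall>j'<j. is ! j' \<noteq> is ! j)}"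
  have injF: "inj_on (nth is) F"
  proof (rule inj_onI)
    fix a b assume ab: "a \<in> F" "b \<in> F" "is ! a = is ! b"
    show "a = b"
    proof (cases a b rule: linorder_cases)
      case less then show ?thesis using ab unfolding F_def by auto
    next
      case greater then show ?thesis using ab unfolding F_def by auto
    qed simp
  qed
  have imF: "nth is ` F = D"
  proof
    show "nth is ` F \<subseteq> D" unfolding F_def D_def k_def by (auto simp: nth_mem)
    show "D \<subseteq> nth is ` F"
    proof
      fix i assume "i \<in> D"
      then obtain j where j: "j < k" "is ! j = i" unfolding D_def k_def by (auto simp: in_set_conv_nth)
      then have "\<exists>j. is ! j = i" by blast
      then obtain j0 where j0: "is ! j0 = i" "\<forall>m<j0. is ! m \<noteq> i"
        using exists_least_iff[of "\<lambda>j. is ! j = i"] by blast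
      have "j0 \<le> j" using j j0 by (metis leI)
      then have "j0 \<in> F" using j j0 unfolding F_def by auto
      then show "i \<in> nth is ` F" using j0 by blast
    qed
  qed
  have cF: "card F = card D" using card_image[OF injF] imF by simp
  define J2 where "J2 = {j. j < k \<and> j \<notin> F \<and> is ! j \<noteq> istar}"
  define J3 where "J3 = {j. j < k \<and> j \<notin> F \<and> is ! j = istar}"
  have finF: "finite F" "finite J2" "finite J3" unfolding F_def J2_def J3_def by auto
  have "{..<k} = F \<union> (J2 \<union> J3)" unfolding F_def J2_def J3_def by auto
  then have "k = card (F \<union> (J2 \<union> J3))" by (metis card_lessThan)
  also have "\<dots> = card F + (card J2 + card J3)"
  proof -
    have "J2 \<inter> J3 = {}" "F \<inter> (J2 \<union> J3) = {}" unfolding J2_def J3_def by auto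
    then show ?thesis using finF by (simp add: card_Un_disjoint)
  qed
  finally have kparts: "k = card D + card J2 + card J3" using cF by simp
  have "fib istar \<subseteq> J3 \<union> (F \<inter> fib istar)" unfolding fib_def J3_def by auto
  moreover have "card (F \<inter> fib istar) \<le> 1"
  proof -
    have "\<forall>a\<in>F \<inter> fib istar. \<forall>b\<in>F \<inter> fib istar. a = b"
      using injF unfolding fib_def by (auto dest: inj_onD)
    then show ?thesis using card_le_Suc0_iff_eq[of "F \<inter> fib istar"] finF by simp
  qed
  ultimately have "M \<le> card J3 + 1"
  proof -
    assume sub: "fib istar \<subseteq> J3 \<union> (F \<inter> fib istar)" and c1: "card (F \<inter> fib istar) \<le> 1"
    have "card (fib istar) \<le> card (J3 \<union> (F \<inter> fib istar))"
      using sub finF by (intro card_mono) auto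
    also have "\<dots> \<le> card J3 + card (F \<inter> fib istar)" by (rule card_Un_le)
    finally show ?thesis using ist(2) c1 by linarith
  qed
  moreover have "2 * k \<le> 2 * t + card D + M" using arith_key[OF kdM] ar unfolding k_def by simp
  ultimately have main: "card D + 2 * card J2 + card J3 \<le> 2 * t + 1" using kparts by linarith
  have valJ2: "\<forall>j\<in>J2. is ! j \<in> D \<and> is ! j \<in> V" unfolding J2_def D_def k_def using V by (auto simp: nth_mem)
  obtain ch2 where ch2: "\<forall>j\<in>J2. ch2 j \<in> {1..2*t} \<and> Q (is ! j) (ch2 j) \<inter> D = {} \<and>
       (\<forall>j'\<in>J2. j \<noteq> j' \<longrightarrow> Q (is ! j) (ch2 j) \<inter> Q (is ! j') (ch2 j') = {})"
    using greedy[OF Qdisj Qcard Qnot finF(2) finD(1) valJ2] main by auto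
  define B where "B = D \<union> (\<Union>j\<in>J2. Q (is ! j) (ch2 j))"
  have finB: "finite B" unfolding B_def using finD ch2 Qcard valJ2 finF by auto
  have "card (\<Union>j\<in>J2. Q (is ! j) (ch2 j)) \<le> (\<Sum>j\<in>J2. card (Q (is ! j) (ch2 j)))"
    using card_UN_le finF(2) by blast
  also have "\<dots> \<le> (\<Sum>j\<in>J2. 2)" using ch2 Qcard valJ2 by (intro sum_mono) auto
  finally have "card (\<Union>j\<in>J2. Q (is ! j) (ch2 j)) \<le> 2 * card J2" by simp
  then have cB: "card B \<le> card D + 2 * card J2" unfolding B_def
    using card_Un_le[of D "\<Union>j\<in>J2. Q (is ! j) (ch2 j)"] by linarith
  have istB: "istar \<in> B" "istar \<in> V" using ist V unfolding B_def D_def by auto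
  define A where "A = {c\<in>{1..2*t}. Q istar c \<inter> B = {}}"
  have blk: "card {c\<in>{1..2*t}. Q istar c \<inter> B \<noteq> {}} \<le> card B - 1"
    by (rule block[OF finB _ _ istB(1)]) (use Qdisj Qnot istB(2) in auto)
  have "{1..2*t} = A \<union> {c\<in>{1..2*t}. Q istar c \<inter> B \<noteq> {}}" unfolding A_def by auto
  then have "2 * t = card A + card {c\<in>{1..2*t}. Q istar c \<inter> B \<noteq> {}}"
    by (metis (no_types, lifting) A_def card_Un_disjoint card_atLeastAtMost diff_Suc_1 finite_Un finite_atLeastAtMost
        disjoint_iff mem_Collect_eq)
  moreover have "card B \<ge> 1" using finB istB(1) by (metis One_nat_def Suc_leI card_gt_0_iff empty_iff)
  ultimately have cJA: "card J3 \<le> card A" using blk cB main by linarith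
  have finA: "finite A" unfolding A_def by simp
  obtain g where g: "g ` J3 \<subseteq> A" "inj_on g J3" using card_le_inj[OF finF(3) finA cJA] by blast
  define S where "S j = (if j \<in> F then {is ! j} else if j \<in> J2 then Q (is ! j) (ch2 j) else Q istar (g j))" for j
  have cls: "j \<in> F \<or> j \<in> J2 \<or> j \<in> J3" if "j < k" for j using that unfolding J2_def J3_def by auto
  have SF: "S j = {is ! j}" "S j \<subseteq> D" "S j \<subseteq> B" if "j \<in> F" for j
    using that imF unfolding S_def B_def by auto
  have S2: "S j = Q (is ! j) (ch2 j)" "S j \<inter> D = {}" "S j \<subseteq> B" "ch2 j \<in> {1..2*t}" if "j \<in> J2" for j
  proof -
    have "j \<notin> F" using that unfolding J2_def by simp
    then show "S j = Q (is ! j) (ch2 j)" using that unfolding S_def by simp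
    then show "S j \<inter> D = {}" "S j \<subseteq> B" "ch2 j \<in> {1..2*t}" using ch2 that unfolding B_def by auto
  qed
  have S3: "S j = Q istar (g j)" "S j \<inter> B = {}" "g j \<in> {1..2*t}" "is ! j = istar" if "j \<in> J3" for j
  proof -
    have "j \<notin> F" "j \<notin> J2" using that unfolding J2_def J3_def by auto
    then show "S j = Q istar (g j)" using that unfolding S_def by simp
    moreover have "g j \<in> A" using g that by blast
    ultimately show "S j \<inter> B = {}" "g j \<in> {1..2*t}" unfolding A_def by auto
    show "is ! j = istar" using that unfolding J3_def by simp
  qed
  have form: "S j = {is!j} \<or> (\<exists>c\<in>{1..2*t}. S j = Q (is!j) c)" if "j < k" for j
    using cls[OF that] SF S2 S3 by metis
  have dis0: "S j \<inter> S j' = {}" if a: "j < k" "j' < k" "j \<noteq> j'" "\<not> (j \<in> J3 \<and> j' \<in> J3)"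
     "\<not> (j \<in> J2 \<and> j' \<in> J2)" "\<not> (j \<in> F \<and> j' \<in> F)" for j j'
  proof -
    consider "j \<in> F" "j' \<in> J2" | "j \<in> F" "j' \<in> J3" | "j \<in> J2" "j' \<in> F" | "j \<in> J2" "j' \<in> J3"
      | "j \<in> J3" "j' \<in> F" | "j \<in> J3" "j' \<in> J2"
      using cls[OF a(1)] cls[OF a(2)] a(4-6) by metis
    then show ?thesis
    proof cases
      case 1 then show ?thesis using SF(2)[of j] S2(2)[of j'] by blast
    next
      case 2 then show ?thesis using SF(3)[of j] S3(2)[of j'] by blast
    next
      case 3 then show ?thesis using SF(2)[of j'] S2(2)[of j] by blast
    next
      case 4 then show ?thesis using S2(3)[of j] S3(2)[of j'] by blast
    next
      case 5 then show ?thesis using SF(3)[of j'] S3(2)[of j] by blast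
    next
      case 6 then show ?thesis using S2(3)[of j'] S3(2)[of j] by blast
    qed
  qed
  have dis: "S j \<inter> S j' = {}" if a: "j < k" "j' < k" "j \<noteq> j'" for j j'
  proof -
    consider "j \<in> F" "j' \<in> F" | "j \<in> J2" "j' \<in> J2" | "j \<in> J3" "j' \<in> J3" | 
       "\<not> (j \<in> J3 \<and> j' \<in> J3)" "\<not> (j \<in> J2 \<and> j' \<in> J2)" "\<not> (j \<in> F \<and> j' \<in> F)" by blast
    then show ?thesis
    proof cases
      case 1
      then have "is ! j \<noteq> is ! j'" using injF a(3) by (meson inj_onD)
      then show ?thesis using SF(1) 1 by simp
    next
      case 2
      then show ?thesis using ch2 S2(1) a(3) by simp
    next
      case 3
      then have "g j \<noteq> g j'" using g(2) a(3) by (meson inj_onD)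
      moreover have "istar \<in> V" by (rule istB(2))
      ultimately show ?thesis using Qdisj S3(1,3) 3 by simp
    next
      case 4
      then show ?thesis using dis0 a by blast
    qed
  qed
  show ?thesis using form dis unfolding k_def by blast
qed



lemma idx_eq_iff: assumes "n \<ge> 1" shows "idx n a = idx n b \<longleftrightarrow> a mod int n = b mod int n"
proof -
  have nn: "(a - 1) mod int n \<ge> 0" "(b - 1) mod int n \<ge> 0" using assms by simp_all
  have "idx n a = idx n b \<longleftrightarrow> nat ((a - 1) mod int n) = nat ((b - 1) mod int n)"
    unfolding idx_def by simp
  also have "\<dots> \<longleftrightarrow> (a - 1) mod int n = (b - 1) mod int n"
    using nn by (simp add: eq_nat_nat_iff)
  also have "\<dots> \<longleftrightarrow> a mod int n = b mod int n"
    by (simp add: mod_eq_dvd_iff)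
  finally show ?thesis .
qed

lemma idx_range: assumes "n \<ge> 1" shows "idx n a \<in> {1..n}"
proof -
  have "(a - 1) mod int n < int n" using assms by simp
  moreover have "(a - 1) mod int n \<ge> 0" using assms by simp
  ultimately have "nat ((a - 1) mod int n) < n" by (simp add: nat_less_iff)
  then show ?thesis unfolding idx_def by simp
qed

lemma idx_id: assumes "i \<in> {1..n}" shows "idx n (int i) = i"
proof -
  have e: "int i - 1 = int (i - 1)" using assms by auto
  have "(int i - 1) mod int n = int (i - 1)" unfolding e using assms by (simp add: mod_pos_pos_trivial)
  then have "nat ((int i - 1) mod int n) = i - 1" by simp
  then show ?thesis unfolding idx_def using assms by simp
qed

lemma idx_rep: assumes "n \<ge> 1" shows "\<exists>q. int (idx n a) = a + int n * q"
proof -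
  have "int (idx n a) = (a - 1) mod int n + 1" unfolding idx_def using assms by simp
  also have "(a - 1) mod int n = (a - 1) - int n * ((a - 1) div int n)"
    by (simp add: minus_div_mult_eq_mod [symmetric] algebra_simps)
  finally have "int (idx n a) = a + int n * (- ((a - 1) div int n))" by simp
  then show ?thesis by blast
qed

lemma idx_per: "idx n (a + int n * q) = idx n a"
proof -
  have "a + int n * q - 1 = (a - 1) + int n * q" by simp
  then have "(a + int n * q - 1) mod int n = ((a - 1) + int n * q) mod int n"
    by (rule arg_cong[where f = "\<lambda>z. z mod int n"])
  also have "\<dots> = (a - 1) mod int n" by (rule mod_mult_self2)
  finally have "(a + int n * q - 1) mod int n = (a - 1) mod int n" .
  then show ?thesis unfolding idx_def by simp
qed

lemma idx_shift: assumes "n \<ge> 1" shows "idx n (x + a) = idx n (x + b) \<longleftrightarrow> a mod int n = b mod int n"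
  using assms by (simp add: idx_eq_iff mod_eq_dvd_iff)

lemma good_pos:
  assumes g: "good_vector t v" and j: "j \<in> {1..t}"
  shows "j < jpos v j" "jpos v j \<le> length v" "v ! (jpos v j - 1) = j" "v ! (jpos v j - j - 1) = j"
proof -
  define P where "P = {i \<in> {1..length v}. v ! (i - 1) = j}"
  have c2: "card P = 2" using g j unfolding good_vector_def P_def by blast
  have fin: "finite P" unfolding P_def by simp
  have ne: "P \<noteq> {}" using c2 by auto
  define J where "J = Max P"
  have Jv: "J = jpos v j" unfolding J_def P_def jpos_def by simp
  have JP: "J \<in> P" unfolding J_def using fin ne by simp
  obtain a b where ab: "P = {a, b}" "a \<noteq> b" using c2 card_2_iff by metis
  obtain p where p: "p \<in> P" "p \<noteq> J" using ab JP by blast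
  have "p \<le> J" unfolding J_def using fin p(1) by simp
  then have pJ: "p < J" using p(2) by simp
  have "J - p = j" using g j p(1) JP pJ unfolding good_vector_def P_def by auto
  moreover have "1 \<le> p" using p(1) unfolding P_def by simp
  ultimately show "j < jpos v j" using Jv pJ by linarith
  show "jpos v j \<le> length v" "v ! (jpos v j - 1) = j" using JP Jv unfolding P_def by auto
  have "p = J - j" using \<open>J - p = j\<close> pJ by linarith
  then show "v ! (jpos v j - j - 1) = j" using p(1) Jv unfolding P_def by simp
qed

definition posf :: "nat \<Rightarrow> nat list \<Rightarrow> nat \<Rightarrow> nat" where
  "posf t v c = (if c \<le> t then jpos v c else jpos v (c - t) - (c - t))"
definition near :: "nat \<Rightarrow> nat \<Rightarrow> int" where
  "near t c = (if c \<le> t then int c else - int (c - t))"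
definition far :: "nat \<Rightarrow> nat list \<Rightarrow> nat \<Rightarrow> int" where
  "far t v c = int t + int (posf t v c)"
definition Qs :: "nat \<Rightarrow> nat list \<Rightarrow> nat \<Rightarrow> nat \<Rightarrow> nat \<Rightarrow> nat set" where
  "Qs t v n i c = {idx n (int i + near t c), idx n (int i + far t v c)}"

lemma posf_props:
  assumes g: "good_vector t v" and c: "c \<in> {1..2*t}"
  shows "1 \<le> posf t v c \<and> posf t v c \<le> length v \<and>
    v ! (posf t v c - 1) = (if c \<le> t then c else c - t)"
proof (cases "c \<le> t")
  case True
  then show ?thesis
    using good_pos[OF g, of c] c unfolding posf_def by auto
next
  case False
  then have j: "c - t \<in> {1..t}" using c by auto
  note gp = good_pos[OF g j]
  have h: "jpos v (c-t) - (c-t) \<ge> 1" "jpos v (c-t) - (c-t) \<le> length v" using gp by linarith+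
  have p: "posf t v c = jpos v (c-t) - (c-t)" using False unfolding posf_def by simp
  show ?thesis unfolding p using h gp(4) False by simp
qed

lemma posf_inj:
  assumes g: "good_vector t v" and c: "c \<in> {1..2*t}" "c' \<in> {1..2*t}"
    and e: "posf t v c = posf t v c'"
  shows "c = c'"
proof -
  have "(if c \<le> t then c else c - t) = (if c' \<le> t then c' else c' - t)"
    using posf_props[OF g c(1)] posf_props[OF g c(2)] e by simp
  moreover have "c \<le> t \<Longrightarrow> c' > t \<Longrightarrow> False"
  proof -
    assume h: "c \<le> t" "c' > t"
    with \<open>(if c \<le> t then c else c - t) = _\<close> have cc: "c = c' - t" by simp
    have "posf t v c = jpos v c" using h unfolding posf_def by simp
    moreover have "posf t v c' = jpos v c - c" using h cc unfolding posf_def by simp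
    moreover have "c < jpos v c" using good_pos(1)[OF g, of c] h c by simp
    ultimately show False using e h c by simp
  qed
  moreover have "c' \<le> t \<Longrightarrow> c > t \<Longrightarrow> False"
  proof -
    assume h: "c' \<le> t" "c > t"
    with \<open>(if c \<le> t then c else c - t) = _\<close> have cc: "c' = c - t" by simp
    have "posf t v c' = jpos v c'" using h unfolding posf_def by simp
    moreover have "posf t v c = jpos v c' - c'" using h cc unfolding posf_def by simp
    moreover have "c' < jpos v c'" using good_pos(1)[OF g, of c'] h c by simp
    ultimately show False using e h c by simp
  qed
  ultimately show ?thesis using c by (auto split: if_splits)
qed

lemma n_bound:
  assumes g: "good_vector t v" and n: "n = (if length v = 2 * t then 4 * t + 1 else 4 * t + 2)"
  shows "2 * t + length v + 1 \<le> n"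
  using g n unfolding good_vector_def by auto

lemma near_mod:
  assumes "c \<in> {1..2*t}" "2 * t < n"
  shows "near t c mod int n = (if c \<le> t then int c else int n - int (c - t))"
proof (cases "c \<le> t")
  case True
  then show ?thesis using assms unfolding near_def by (simp add: mod_pos_pos_trivial)
next
  case False
  have "- int (c - t) = (int n - int (c - t)) + int n * (-1)" by simp
  then have "- int (c - t) mod int n = (int n - int (c - t)) mod int n"
    by (metis mod_mult_self2)
  also have "\<dots> = int n - int (c - t)" using assms False by (intro mod_pos_pos_trivial) auto
  finally show ?thesis using False unfolding near_def by simp
qed

lemma far_mod:
  assumes g: "good_vector t v" and c: "c \<in> {1..2*t}" and nb: "2 * t + length v + 1 \<le> n"
  shows "far t v c mod int n = far t v c"
  using posf_props[OF g c] nb unfolding far_def by (intro mod_pos_pos_trivial) auto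



definition rn :: "nat \<Rightarrow> nat \<Rightarrow> nat \<Rightarrow> int" where
  "rn t n c = (if c \<le> t then int c else int n - int (c - t))"

lemma far_range:
  assumes g: "good_vector t v" and c: "c \<in> {1..2*t}" and nb: "2 * t + length v + 1 \<le> n"
  shows "int t + 1 \<le> far t v c" "far t v c \<le> int n - int t - 1"
  using posf_props[OF g c] nb unfolding far_def by auto

lemma Qs_facts:
  assumes g: "good_vector t v" and nb: "2 * t + length v + 1 \<le> n"
    and c: "c \<in> {1..2*t}" and c': "c' \<in> {1..2*t}"
  shows "c \<noteq> c' \<Longrightarrow> Qs t v n i c \<inter> Qs t v n i c' = {}"
    and "idx n (int i + near t c) \<noteq> idx n (int i + far t v c)"
    and "i \<in> {1..n} \<Longrightarrow> i \<notin> Qs t v n i c"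
    and "Qs t v n i c \<subseteq> {1..n}"
    and "finite (Qs t v n i c) \<and> card (Qs t v n i c) \<le> 2"
proof -
  have n1: "n \<ge> 1" "2 * t < n" using nb by auto
  have nm: "near t c mod int n = rn t n c" "near t c' mod int n = rn t n c'"
    using near_mod[OF c n1(2)] near_mod[OF c' n1(2)] unfolding rn_def by auto
  have fm: "far t v c mod int n = far t v c" "far t v c' mod int n = far t v c'"
    using far_mod[OF g c nb] far_mod[OF g c' nb] by auto
  have fr: "int t + 1 \<le> far t v c" "far t v c \<le> int n - int t - 1"
    "int t + 1 \<le> far t v c'" "far t v c' \<le> int n - int t - 1"
    using far_range[OF g c nb] far_range[OF g c' nb] by auto
  have rnr: "rn t n c \<le> int t \<or> rn t n c \<ge> int n - int t" "rn t n c' \<le> int t \<or> rn t n c' \<ge> int n - int t"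
    "rn t n c \<ge> 1" "rn t n c' \<ge> 1"
    using c c' n1 unfolding rn_def by auto
  have sh: "idx n (int i + a) = idx n (int i + b) \<longleftrightarrow> a mod int n = b mod int n" for a b
    using idx_shift[OF n1(1)] by blast
  show "idx n (int i + near t c) \<noteq> idx n (int i + far t v c)"
    unfolding sh nm fm using fr rnr by linarith
  show "c \<noteq> c' \<Longrightarrow> Qs t v n i c \<inter> Qs t v n i c' = {}"
  proof -
    assume ne: "c \<noteq> c'"
    have a1: "rn t n c \<noteq> rn t n c'" using ne c c' n1 unfolding rn_def by (auto split: if_splits)
    have a2: "far t v c \<noteq> far t v c'" using ne posf_inj[OF g c c'] unfolding far_def by auto
    have "idx n (int i + near t c) \<noteq> idx n (int i + near t c')" unfolding sh nm using a1 .
    moreover have "idx n (int i + far t v c) \<noteq> idx n (int i + far t v c')" unfolding sh fm using a2 .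
    moreover have "idx n (int i + near t c) \<noteq> idx n (int i + far t v c')"
      unfolding sh nm fm using fr rnr by linarith
    moreover have "idx n (int i + far t v c) \<noteq> idx n (int i + near t c')"
      unfolding sh nm fm using fr rnr by linarith
    ultimately show ?thesis unfolding Qs_def by auto
  qed
  show "i \<in> {1..n} \<Longrightarrow> i \<notin> Qs t v n i c"
  proof -
    assume i: "i \<in> {1..n}"
    have ii: "i = idx n (int i + 0)" using idx_id[OF i] by simp
    have "idx n (int i + 0) \<noteq> idx n (int i + near t c)" unfolding sh nm using rnr by simp
    moreover have "idx n (int i + 0) \<noteq> idx n (int i + far t v c)" unfolding sh fm using fr by simp
    ultimately show ?thesis unfolding Qs_def using ii by auto
  qed
  show "Qs t v n i c \<subseteq> {1..n}" unfolding Qs_def using idx_range[OF n1(1)] by auto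
  show "finite (Qs t v n i c) \<and> card (Qs t v n i c) \<le> 2" unfolding Qs_def by (simp add: card_insert_le_m1)
qed

lemma recov:
  assumes g: "good_vector t v" and nb: "2 * t + length v + 1 \<le> n"
    and c: "c \<in> {1..2*t}" and i: "i \<in> {1..n}"
  shows "constrC t v n x (idx n (int i + far t v c)) (if c \<le> t then c else c - t)
         - constrC t v n x (idx n (int i + near t c)) 0 = x i"
proof -
  have n1: "n \<ge> 1" using nb by auto
  define l1 where "l1 = idx n (int i + far t v c)"
  define l2 where "l2 = idx n (int i + near t c)"
  obtain q where q: "int l1 = int i + far t v c + int n * q" using idx_rep[OF n1] unfolding l1_def by blast
  have xi: "x (idx n (int i + int n * q)) = x i" using idx_per idx_id[OF i] by simp
  have xl2: "x (idx n (int i + near t c + int n * q)) = x l2" unfolding l2_def using idx_per by simp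
  show ?thesis
  proof (cases "c \<le> t")
    case True
    define J where "J = jpos v c"
    have f: "far t v c = int t + int J" unfolding far_def posf_def J_def using True by simp
    have nr: "near t c = int c" unfolding near_def using True by simp
    have e1: "int l1 - int t - int J = int i + int n * q" using q f by simp
    have e2: "int l1 - int t - int J + int c = int i + near t c + int n * q" using q f nr by simp
    have "constrC t v n x l1 c = x (idx n (int l1 - int t - int J)) + x (idx n (int l1 - int t - int J + int c))"
      unfolding constrC_def J_def using c by simp
    also have "\<dots> = x i + x l2"
    proof -
      have "x (idx n (int l1 - int t - int J)) = x i" by (subst e1) (rule xi)
      moreover have "x (idx n (int l1 - int t - int J + int c)) = x l2" by (subst e2) (rule xl2)
      ultimately show ?thesis by simp
    qed
    finally show ?thesis using True unfolding l1_def[symmetric] l2_def[symmetric] by (simp add: constrC_def)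
  next
    case False
    define j where "j = c - t"
    have j: "j \<in> {1..t}" using False c unfolding j_def by auto
    define J where "J = jpos v j"
    have jJ: "j < J" unfolding J_def using good_pos(1)[OF g j] .
    have f: "far t v c = int t + int J - int j" unfolding far_def posf_def J_def j_def using False jJ
      by (simp add: of_nat_diff J_def j_def)
    have nr: "near t c = - int j" unfolding near_def j_def using False by simp
    have e1: "int l1 - int t - int J = int i + near t c + int n * q" using q f nr by simp
    have e2: "int l1 - int t - int J + int j = int i + int n * q" using q f by simp
    have "constrC t v n x l1 j = x (idx n (int l1 - int t - int J)) + x (idx n (int l1 - int t - int J + int j))"
      unfolding constrC_def J_def using j by simp
    also have "\<dots> = x l2 + x i"
    proof -
      have "x (idx n (int l1 - int t - int J)) = x l2" by (subst e1) (rule xl2)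
      moreover have "x (idx n (int l1 - int t - int J + int j)) = x i" by (subst e2) (rule xi)
      ultimately show ?thesis by simp
    qed
    finally show ?thesis using False unfolding l1_def[symmetric] l2_def[symmetric] j_def[symmetric]
      by (simp add: constrC_def)
  qed
qed



lemma if_mult1: "(if P then 1 else 0) * (z::'a::field) = (if P then z else 0)" by simp
lemma if_mult2: "(if P then 1 else if Q then -1 else 0) * (z::'a::field) = (if P then z else if Q then -z else 0)" by simp

lemma if_mult3: "(if P then -1 else 0) * (z::'a::field) = (if P then -z else 0)" by simp

lemma sum_pick1:
  fixes e :: "nat \<Rightarrow> nat \<Rightarrow> 'a::field"
  assumes "finite R" "l1 \<in> R" "r1 < N"
  shows "(\<Sum>l\<in>R. 1 * (\<Sum>r<N. (if l = l1 \<and> r = r1 then 1 else 0) * e l r)) = e l1 r1"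
proof -
  have "(\<Sum>r<N. (if l = l1 \<and> r = r1 then 1 else 0) * e l r) = (if l = l1 then e l1 r1 else 0)" for l
    using assms(3) by (cases "l = l1") (simp_all add: if_mult1 if_mult2 if_mult3)
  then show ?thesis using assms by simp
qed

lemma sum_pick2:
  fixes e :: "nat \<Rightarrow> nat \<Rightarrow> 'a::field"
  assumes "finite R" "l1 \<in> R" "l2 \<in> R" "l1 \<noteq> l2" "r1 < N" "r2 < N"
  shows "(\<Sum>l\<in>R. 1 * (\<Sum>r<N. (if l = l1 \<and> r = r1 then 1 else if l = l2 \<and> r = r2 then -1 else 0) * e l r))
     = e l1 r1 - e l2 r2"
proof -
  have "(\<Sum>r<N. (if l = l1 \<and> r = r1 then 1 else if l = l2 \<and> r = r2 then -1 else 0) * e l r)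
     = (if l = l1 then e l1 r1 else 0) - (if l = l2 then e l2 r2 else 0)" for l
  proof (cases "l = l1")
    case True
    have A: "(\<Sum>r<N. (if l1 = l1 \<and> r = r1 then 1 else if l1 = l2 \<and> r = r2 then -1 else 0) * e l1 r) = e l1 r1"
    proof -
      have "(if l1 = l1 \<and> r = r1 then 1 else if l1 = l2 \<and> r = r2 then -1 else 0) * e l1 r = (if r = r1 then e l1 r else 0)" for r
        using assms(4) by auto
      then show ?thesis using assms(5) by simp
    qed
    show ?thesis unfolding True using A assms(4) by simp
  next
    case False
    then show ?thesis using assms(6) by (cases "l = l2") (simp_all add: if_mult1 if_mult2 if_mult3)
  qed
  then have "(\<Sum>l\<in>R. 1 * (\<Sum>r<N. (if l = l1 \<and> r = r1 then 1 else if l = l2 \<and> r = r2 then -1 else 0) * e l r))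
     = (\<Sum>l\<in>R. (if l = l1 then e l1 r1 else 0) - (if l = l2 then e l2 r2 else 0))" by simp
  also have "\<dots> = e l1 r1 - e l2 r2" using assms(1-3) by (simp add: sum_subtractf)
  finally show ?thesis .
qed

lemma k_props:
  fixes t k :: nat
  assumes t: "t \<ge> 1" and k: "k = nat \<lfloor>(sqrt (real t + 1/4) + 1/2)\<^sup>2\<rfloor>"
  shows "k \<ge> 1" "(k - t) * (k - t - 1) \<le> t"
proof -
  define x where "x = sqrt (real t + 1/4)"
  have x0: "x \<ge> 0" unfolding x_def by simp
  have x2: "x\<^sup>2 = real t + 1/4" unfolding x_def by simp
  define y where "y = (x + 1/2)\<^sup>2"
  have yy: "y = real t + 1/2 + x" unfolding y_def using x2 by (simp add: power2_eq_square algebra_simps)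
  have fl0: "\<lfloor>y\<rfloor> \<ge> 0" using yy x0 by simp
  have rk: "real k = real_of_int \<lfloor>y\<rfloor>" using k fl0 unfolding y_def x_def by simp
  have ky: "real k \<le> y" using rk of_int_floor_le by simp
  have f1: "\<lfloor>y\<rfloor> \<ge> 1" using yy x0 t by (simp add: le_floor_iff)
  have "real_of_int \<lfloor>y\<rfloor> \<ge> 1" using f1 by linarith
  then have "real k \<ge> 1" using rk by simp
  then show "k \<ge> 1" by simp
  show "(k - t) * (k - t - 1) \<le> t"
  proof (cases "k \<le> t")
    case True then show ?thesis by simp
  next
    case False
    define s where "s = k - t"
    have s1: "s \<ge> 1" using False unfolding s_def by simp
    have rs: "real s = real k - real t" using False unfolding s_def by (simp add: of_nat_diff)
    have "real s - 1/2 \<le> x" using rs ky yy by simp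
    moreover have "0 \<le> real s - 1/2" using s1 by simp
    ultimately have "(real s - 1/2)\<^sup>2 \<le> x\<^sup>2" by (intro power_mono) auto
    then have "real s * real s - real s \<le> real t" using x2 by (simp add: power2_eq_square algebra_simps)
    moreover have "real (s * (s - 1)) = real s * real s - real s" using s1 by (simp add: of_nat_diff algebra_simps)
    ultimately have "real (s * (s - 1)) \<le> real t" by simp
    then show ?thesis unfolding s_def by (simp only: of_nat_le_iff)
  qed
qed



theorem corollary4p9:
  fixes t n :: nat and v :: "nat list"
  assumes "t \<ge> 1"
    and "good_vector t v"
    and "n = (if length v = 2 * t then 4 * t + 1 else 4 * t + 2)"
  shows "is_BAC n ((t + 1) * n) (nat \<lfloor>(sqrt (real t + 1/4) + 1/2)\<^sup>2\<rfloor>) n (\<lambda>_. t + 1)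
           (constrC t v n :: (nat \<Rightarrow> 'a::{field,finite}) \<Rightarrow> _)"
proof -
  define k where "k = nat \<lfloor>(sqrt (real t + 1/4) + 1/2)\<^sup>2\<rfloor>"
  note kp = k_props[OF assms(1) k_def]
  have g: "good_vector t v" by (rule assms(2))
  have nb: "2 * t + length v + 1 \<le> n" by (rule n_bound[OF assms(2,3)])
  have n1: "n \<ge> 1" using nb by simp
  have lin1: "constrC t v n (\<lambda>i. x i + y i) l r = constrC t v n x l r + constrC t v n y l r"
    for x y :: "nat \<Rightarrow> 'a" and l r unfolding constrC_def by (simp add: algebra_simps)
  have lin2: "constrC t v n (\<lambda>i. c * x i) l r = c * constrC t v n x l r"
    for x :: "nat \<Rightarrow> 'a" and c l r unfolding constrC_def by (simp add: algebra_simps)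
  have main: "\<exists>R :: nat \<Rightarrow> nat set.
           (\<forall>j<k. R j \<noteq> {}) \<and> (\<forall>j<k. \<forall>j'<k. j \<noteq> j' \<longrightarrow> R j \<inter> R j' = {}) \<and>
           (\<Union>j<k. R j) = {1..n} \<and>
           (\<forall>j<k. \<exists>(w :: nat \<Rightarrow> nat \<Rightarrow> 'a) (a :: nat \<Rightarrow> 'a). \<forall>x.
               x (is ! j) = (\<Sum>l\<in>R j. a l * (\<Sum>r<t + 1. w l r * constrC t v n x l r)))"
    if isk: "length is = k" "set is \<subseteq> {1..n}" for "is"
  proof -
    have QD: "\<forall>i\<in>{1..n}. \<forall>c\<in>{1..2*t}. \<forall>c'\<in>{1..2*t}. c \<noteq> c' \<longrightarrow> Qs t v n i c \<inter> Qs t v n i c' = {}"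
      using Qs_facts(1)[OF g nb] by blast
    have QC: "\<forall>i\<in>{1..n}. \<forall>c\<in>{1..2*t}. finite (Qs t v n i c) \<and> card (Qs t v n i c) \<le> 2"
      using Qs_facts(5)[OF g nb] by blast
    have QN: "\<forall>i\<in>{1..n}. \<forall>c\<in>{1..2*t}. i \<notin> Qs t v n i c"
      using Qs_facts(3)[OF g nb] by blast
    have ar: "(length is - t) * (length is - t - 1) \<le> t" using kp(2) isk(1) by simp
    obtain S where S: "\<forall>j<length is. S j = {is!j} \<or> (\<exists>c\<in>{1..2*t}. S j = Qs t v n (is!j) c)"
      "\<forall>j<length is. \<forall>j'<length is. j \<noteq> j' \<longrightarrow> S j \<inter> S j' = {}"
      using comb[OF QD QC QN isk(2) ar] by blast
    have isn: "is ! j \<in> {1..n}" if "j < k" for j using isk that by (auto simp: nth_mem subset_iff)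
    have Ssub: "S j \<subseteq> {1..n}" if "j < k" for j
      using S(1) isk(1) that isn[OF that] Qs_facts(4)[OF g nb] by (metis empty_subsetI insert_subset)
    have Sne: "S j \<noteq> {}" if "j < k" for j
      using S(1) isk(1) that unfolding Qs_def by fastforce
    define Lft where "Lft = {1..n} - (\<Union>j<k. S j)"
    define R where "R j = (if j = 0 then S j \<union> Lft else S j)" for j
    have SR: "S j \<subseteq> R j" for j unfolding R_def by auto
    have finR: "finite (R j)" if "j < k" for j
      using Ssub[OF that] unfolding R_def Lft_def by (auto intro: finite_subset)
    have r1: "\<forall>j<k. R j \<noteq> {}" using Sne SR by blast
    have r2: "\<forall>j<k. \<forall>j'<k. j \<noteq> j' \<longrightarrow> R j \<inter> R j' = {}"
    proof (intro allI impI)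
      fix j j' assume jj: "j < k" "j' < k" "j \<noteq> j'"
      have d: "S j \<inter> S j' = {}" using S(2) jj isk(1) by simp
      have "Lft \<inter> S j = {}" "Lft \<inter> S j' = {}" unfolding Lft_def using jj by auto
      then show "R j \<inter> R j' = {}" unfolding R_def using d jj(3) by auto
    qed
    have r3: "(\<Union>j<k. R j) = {1..n}"
    proof
      show "(\<Union>j<k. R j) \<subseteq> {1..n}" unfolding R_def Lft_def using Ssub by auto
      show "{1..n} \<subseteq> (\<Union>j<k. R j)"
      proof
        fix l assume l: "l \<in> {1..n}"
        show "l \<in> (\<Union>j<k. R j)"
        proof (cases "l \<in> Lft")
          case True
          then have "l \<in> R 0" unfolding R_def by simp
          moreover have "0 \<in> {..<k}" using kp(1) by simp
          ultimately show ?thesis by blast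
        next
          case False
          then obtain j where "j < k" "l \<in> S j" using l unfolding Lft_def by auto
          then show ?thesis using SR by blast
        qed
      qed
    qed
    have r4: "\<exists>(w :: nat \<Rightarrow> nat \<Rightarrow> 'a) (a :: nat \<Rightarrow> 'a). \<forall>x.
               x (is ! j) = (\<Sum>l\<in>R j. a l * (\<Sum>r<t + 1. w l r * constrC t v n x l r))" if j: "j < k" for j
    proof -
      define i where "i = is ! j"
      have i: "i \<in> {1..n}" unfolding i_def using isn[OF j] .
      consider "S j = {i}" | c where "c \<in> {1..2*t}" "S j = Qs t v n i c"
        using S(1) j isk(1) unfolding i_def by blast
      then show ?thesis
      proof cases
        case 1
        have iR: "i \<in> R j" using 1 SR by blast
        have "x i = (\<Sum>l\<in>R j. 1 * (\<Sum>r<t + 1. (if l = i \<and> r = 0 then 1 else 0) * constrC t v n x l r))"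
          for x :: "nat \<Rightarrow> 'a"
          using sum_pick1[OF finR[OF j] iR, of 0 "t + 1" "constrC t v n x"] by (simp add: constrC_def)
        then have H: "\<forall>x :: nat \<Rightarrow> 'a. x (is ! j) = (\<Sum>l\<in>R j. 1 * (\<Sum>r<t + 1. (if l = i \<and> r = 0 then 1 else 0) * constrC t v n x l r))"
          unfolding i_def by blast
        show ?thesis by (rule exI, rule exI, rule H)
      next
        case (2 c)
        define l1 where "l1 = idx n (int i + far t v c)"
        define l2 where "l2 = idx n (int i + near t c)"
        define rr where "rr = (if c \<le> t then c else c - t)"
        have lR: "l1 \<in> R j" "l2 \<in> R j" using 2(2) SR unfolding l1_def l2_def Qs_def by blast+
        have lne: "l1 \<noteq> l2" using Qs_facts(2)[OF g nb 2(1) 2(1)] unfolding l1_def l2_def by metis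
        have rrt: "rr < t + 1" unfolding rr_def using 2(1) by auto
        have "x i = (\<Sum>l\<in>R j. 1 * (\<Sum>r<t + 1. (if l = l1 \<and> r = rr then 1 else if l = l2 \<and> r = 0 then -1 else 0)
                 * constrC t v n x l r))" for x :: "nat \<Rightarrow> 'a"
          using sum_pick2[OF finR[OF j] lR lne rrt, of 0 "constrC t v n x"] recov[OF g nb 2(1) i, of x]
          unfolding l1_def l2_def rr_def by simp
        then have H: "\<forall>x :: nat \<Rightarrow> 'a. x (is ! j) = (\<Sum>l\<in>R j. 1 * (\<Sum>r<t + 1. (if l = l1 \<and> r = rr then 1 else if l = l2 \<and> r = 0 then -1 else 0)
                 * constrC t v n x l r))"
          unfolding i_def by blast
        show ?thesis by (rule exI, rule exI, rule H)
      qed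
    qed
    show ?thesis using r1 r2 r3 r4 by blast
  qed
  show ?thesis unfolding is_BAC_def k_def[symmetric]
    using main lin1 lin2 by auto
qed


end
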